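(* For every $\Gamma\subseteq\mathcal{L}_{\Box\!\!\rightarrow}$, we have $(\Gamma,\emptyset)\notin\mathsf{N4CK}$; i.e. every set of formulas of $\mathcal{L}_{\Box\!\!\rightarrow}$ is verified at some point of some Nelsonian conditional model.
   Context: Let $\mathcal{L}_{\Box\!\!\rightarrow}$ be the language built from propositional variables $p_0,p_1,\dots$ with binary $\wedge,\vee,\to$, unary strong negation $\sim$, and a binary would-conditional $\Box\!\!\rightarrow$. A Nelsonian conditional model is $\mathcal{M}=(W,\leq,R,V^+,V^-)$ where $W\neq\emptyset$, $\leq$ is a preorder on $W$, $V^+,V^-$ map each variable to a $\leq$-upward-closed subset of $W$, and $R\subseteq W\times(\mathcal{P}(W)\times\mathcal{P}(W))\times W$ (write $R_{(X,Y)}(w,v)$ for $(w,(X,Y),v)\in R$) satisfies for all $X,Y\subseteq W$: (c1) if $w\leq w'$ and $R_{(X,Y)}(w,v)$ then $R_{(X,Y)}(w',v')$ for some $v'\geq v$; (c2) if $R_{(X,Y)}(w,v)$ and $v\leq v'$ then $R_{(X,Y)}(w',v')$ for some $w'\geq w$. Verification $\models^+$ and falsification $\models^-$ are defined inductively: $w\models^\pm p$ iff $w\in V^\pm(p)$; $\wedge$: verified iff both conjuncts verified, falsified iff one is falsified; $\vee$: verified iff one disjunct verified, falsified iff both falsified; $w\models^+\sim\psi$ iff $w\models^-\psi$ and $w\models^-\sim\psi$ iff $w\models^+\psi$; $w\models^+\psi\to\chi$ iff for all $v\geq w$, $v\models^+\psi$ implies $v\models^+\chi$; $w\models^-\psi\to\chi$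 iff $w\models^+\psi$ and $w\models^-\chi$; $w\models^+\psi\Box\!\!\rightarrow\chi$ iff for all $v\geq w$ and all $u$ with $R_{\|\psi\|_\mathcal{M}}(v,u)$, $u\models^+\chi$; $w\models^-\psi\Box\!\!\rightarrow\chi$ iff some $u$ has $R_{\|\psi\|_\mathcal{M}}(w,u)$ and $u\models^-\chi$; here $\|\psi\|_\mathcal{M}=(\{w\mid w\models^+\psi\},\{w\mid w\models^-\psi\})$. $\mathsf{N4CK}$ is the set of pairs $(\Gamma,\Delta)$ of sets of formulas such that no pointed model verifies all members of $\Gamma$ while verifying no member of $\Delta$. *)

theory Defs
  imports Main
begin

datatype form =
    Var nat
  | Conj form form
  | Disj form form
  | Imp form form
  | SNeg form
  | Cond form form

text \<open>A Nelsonian conditional model with worlds of type 'w.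
  R (X,Y) w v stands for R_(X,Y)(w,v).\<close>
record 'w ncmodel =
  W :: "'w set"
  le :: "'w \<Rightarrow> 'w \<Rightarrow> bool"
  R :: "'w set \<times> 'w set \<Rightarrow> 'w \<Rightarrow> 'w \<Rightarrow> bool"
  Vp :: "nat \<Rightarrow> 'w set"
  Vm :: "nat \<Rightarrow> 'w set"

definition upclosed :: "'w ncmodel \<Rightarrow> 'w set \<Rightarrow> bool" where
  "upclosed M A \<longleftrightarrow> A \<subseteq> W M \<and>
     (\<forall>w\<in>A. \<forall>v\<in>W M. le M w v \<longrightarrow> v \<in> A)"

definition is_model :: "'w ncmodel \<Rightarrow> bool" where
  "is_model M \<longleftrightarrow>
     W M \<noteq> {} \<and>
     (\<forall>w\<in>W M. le M w w) \<and>
     (\<forall>u\<in>W M. \<forall>v\<in>W M. \<forall>w\<in>W M. le M u v \<longrightarrow> le M v w \<longrightarrow> le M u w) \<and>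
     (\<forall>p. upclosed M (Vp M p) \<and> upclosed M (Vm M p)) \<and>
     (\<forall>X Y w v. R M (X,Y) w v \<longrightarrow> w \<in> W M \<and> v \<in> W M) \<and>
     (\<forall>X Y. X \<subseteq> W M \<longrightarrow> Y \<subseteq> W M \<longrightarrow>
        (\<forall>w\<in>W M. \<forall>w'\<in>W M. \<forall>v\<in>W M. le M w w' \<longrightarrow> R M (X,Y) w v \<longrightarrow>
            (\<exists>v'\<in>W M. le M v v' \<and> R M (X,Y) w' v')) \<and>
        (\<forall>w\<in>W M. \<forall>v\<in>W M. \<forall>v'\<in>W M. R M (X,Y) w v \<longrightarrow> le M v v' \<longrightarrow>
            (\<exists>w'\<in>W M. le M w w' \<and> R M (X,Y) w' v')))"

text \<open>sat M True w A: w verifies A;  sat M False w A: w falsifies A.\<close>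
fun sat :: "'w ncmodel \<Rightarrow> bool \<Rightarrow> 'w \<Rightarrow> form \<Rightarrow> bool" where
  "sat M True w (Var p) = (w \<in> Vp M p)"
| "sat M False w (Var p) = (w \<in> Vm M p)"
| "sat M True w (Conj a b) = (sat M True w a \<and> sat M True w b)"
| "sat M False w (Conj a b) = (sat M False w a \<or> sat M False w b)"
| "sat M True w (Disj a b) = (sat M True w a \<or> sat M True w b)"
| "sat M False w (Disj a b) = (sat M False w a \<and> sat M False w b)"
| "sat M True w (SNeg a) = sat M False w a"
| "sat M False w (SNeg a) = sat M True w a"
| "sat M True w (Imp a b) =
     (\<forall>v\<in>W M. le M w v \<longrightarrow> sat M True v a \<longrightarrow> sat M True v b)"
| "sat M False w (Imp a b) = (sat M True w a \<and> sat M False w b)"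
| "sat M True w (Cond a b) =
     (\<forall>v\<in>W M. le M w v \<longrightarrow>
        (\<forall>u. R M ({x\<in>W M. sat M True x a}, {x\<in>W M. sat M False x a}) v u \<longrightarrow> sat M True u b))"
| "sat M False w (Cond a b) =
     (\<exists>u. R M ({x\<in>W M. sat M True x a}, {x\<in>W M. sat M False x a}) w u \<and> sat M False u b)"

text \<open>N4CK relative to models whose worlds are drawn from the type 'w.\<close>
definition N4CK :: "'w itself \<Rightarrow> (form set \<times> form set) set" where
  "N4CK _ = {(\<Gamma>, \<Delta>). \<not> (\<exists>(M::'w ncmodel) w. is_model M \<and> w \<in> W M \<and>
        (\<forall>A\<in>\<Gamma>. sat M True w A) \<and> (\<forall>B\<in>\<Delta>. \<not> sat M True w B))}"

end

theory Submission
  imports Defs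
begin

definition triv :: "'w ncmodel" where
  "triv = \<lparr>W = UNIV, le = (\<lambda>_ _. True), R = (\<lambda>_ _ _. True),
           Vp = (\<lambda>_. UNIV), Vm = (\<lambda>_. UNIV)\<rparr>"

lemma triv_sat: "sat (triv :: 'w ncmodel) b w A"
  by (induction A arbitrary: b w) (case_tac b; auto simp: triv_def)+

lemma triv_model: "is_model (triv :: 'w ncmodel)"
  by (auto simp: is_model_def upclosed_def triv_def)

theorem proposition6:
  fixes \<Gamma> :: "form set"
  shows "(\<Gamma>, {}) \<notin> N4CK TYPE('w)"
proof -
  have "(triv :: 'w ncmodel) \<in> {M. W M = UNIV}" by (simp add: triv_def)
  have m: "is_model (triv :: 'w ncmodel)" by (rule triv_model)
  have s: "\<And>A. sat (triv :: 'w ncmodel) True undefined A" by (rule triv_sat)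
  have w: "undefined \<in> W (triv :: 'w ncmodel)" by (simp add: triv_def)
  have "is_model (triv :: 'w ncmodel) \<and> undefined \<in> W (triv :: 'w ncmodel) \<and>
     (\<forall>A\<in>\<Gamma>. sat (triv :: 'w ncmodel) True undefined A)"
    using w m s by simp
  thus ?thesis unfolding N4CK_def by blast
qed

end
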